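(* Let $K$ and $K'$ be two non-degenerate CMIs, with $\mathrm{can}(\mathrm{pur}(K))=(C,\langle\mathbb I_K,\mathbb I_K,P_i,1\le i\le t\rangle)$. Let $K''=R_K^{K'}$ and $\mathrm{can}(\mathrm{pur}(K''))=(C'',\langle\mathbb I_{K''},\mathbb I_{K''},P''_j,1\le j\le r\rangle)$, and let $S=C\cup\bigcup_{i=1}^tP_i$ and $P''=\bigcup_{j=1}^rP''_j$. If $K$ implies $K'$ and $R_K^{K'}\ne(\cdot,\langle\ \rangle)$, then $C\subseteq C''\subseteq S\setminus P''$.
   Context: Setting: $X_1,\dots,X_n$ jointly distributed discrete random variables with $H(X_i)<\infty$; distribution unspecified. $X_\alpha=(X_i,i\in\alpha)$, $X_\emptyset$ constant. A CMI is $K=(C,\langle Q_1,\dots,Q_k\rangle)$, $k\ge0$, $C\subseteq\{1,\dots,n\}$, $\langle\cdot\rangle$ an unordered multiset of subsets; valid (for a given distribution) if $\sum_iH(X_{Q_i}|X_C)-H(X_{Q_1},\dots,X_{Q_k}|X_C)=0$. Empty members may be deleted. Degenerate = valid for every distribution, written $(\cdot,\langle\ \rangle)$. "$K$ implies $K'$": for every joint distribution, if $K$ is valid then $K'$ is valid. $\mathrm{pur}(K)=(C,\langle Q_i\setminus C:Q_i\setminus C\ne\emptyset\rangle)$. For pure $K$: $\mathbb I_K$ = indices lying in at least two members of the collection if $k\ge2$, else $\emptyset$; $P_1,\dots,P_t$ the nonempty sets among $Q_i\setminus\mathbb I_K$; $\mathrm{can}(K)=(\cdot,\langle\ \rangle)$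 if $k\le1$, $(C,\langle\mathbb I_K,\mathbb I_K\rangle)$ if $k\ge2,\mathbb I_K\ne\emptyset,t\le1$, $(C,\langle P_1..P_t\rangle)$ if $k\ge2,\mathbb I_K=\emptyset$, $(C,\langle\mathbb I_K,\mathbb I_K,P_1..P_t\rangle)$ if $k\ge2,\mathbb I_K\ne\emptyset,t\ge2$. For general $K$, $\mathbb I_K$ is the repeated-index set of $\mathrm{pur}(K)$; general-form notation omits the copies of $\mathbb I_K$ when empty and uses $t=0$ for $(C,\langle\mathbb I_K,\mathbb I_K\rangle)$. $R_K^{K'}$: with $\mathrm{can}(\mathrm{pur}(K'))=(C',\langle\mathbb I_{K'},\mathbb I_{K'},P'_j,1\le j\le s\rangle)$, $D=\mathbb I_{K'}\setminus\mathbb I_K$ and $T_1,\dots,T_u$ the nonempty sets among $P'_j\setminus\mathbb I_K$: $R_K^{K'}=(\cdot,\langle\ \rangle)$ if $D=\emptyset,u\le1$; $(C'\setminus\mathbb I_K,\langle T_1..T_u\rangle)$ if $D=\emptyset,u\ge2$; $(C'\setminus\mathbb I_K,\langle D,D\rangle)$ if $D\ne\emptyset,u\le1$; $(C'\setminus\mathbb I_K,\langle D,D,T_1..T_u\rangle)$ if $D\ne\emptyset,u\ge2$. *)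

theory Defs
  imports "HOL-Probability.Probability_Mass_Function" "HOL-Analysis.Infinite_Sum"
          "HOL-Library.Multiset"
begin

text \<open>A joint distribution of X_1..X_n: a pmf p on nat => nat; X_i is coordinate i.
  Every countable alphabet embeds into nat, and entropies are invariant under relabelling.\<close>

definition marg :: "(nat \<Rightarrow> nat) pmf \<Rightarrow> nat set \<Rightarrow> (nat \<Rightarrow> nat) pmf" where
  "marg p \<alpha> = map_pmf (\<lambda>\<omega> i. if i \<in> \<alpha> then \<omega> i else 0) p"

definition entr_terms :: "'a pmf \<Rightarrow> 'a \<Rightarrow> real" where
  "entr_terms q x = - pmf q x * log 2 (pmf q x)"

text \<open>Shannon entropy H(X_alpha) (meaningful when finite).\<close>
definition H :: "(nat \<Rightarrow> nat) pmf \<Rightarrow> nat set \<Rightarrow> real" where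
  "H p \<alpha> = infsum (entr_terms (marg p \<alpha>)) UNIV"

definition finite_entropy :: "(nat \<Rightarrow> nat) pmf \<Rightarrow> nat set \<Rightarrow> bool" where
  "finite_entropy p \<alpha> \<longleftrightarrow> entr_terms (marg p \<alpha>) summable_on UNIV"

definition condH :: "(nat \<Rightarrow> nat) pmf \<Rightarrow> nat set \<Rightarrow> nat set \<Rightarrow> real" where
  "condH p A C = H p (A \<union> C) - H p C"

definition admissible :: "nat \<Rightarrow> (nat \<Rightarrow> nat) pmf \<Rightarrow> bool" where
  "admissible n p \<longleftrightarrow> (\<forall>i\<in>{1..n}. finite_entropy p {i})"

text \<open>A CMI (C, <Q_1..Q_k>) with an unordered multiset of subsets.\<close>
type_synonym cmi = "nat set \<times> nat set multiset"

definition wf_cmi :: "nat \<Rightarrow> cmi \<Rightarrow> bool" where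
  "wf_cmi n K \<longleftrightarrow> fst K \<subseteq> {1..n} \<and> (\<forall>Q\<in>#snd K. Q \<subseteq> {1..n})"

definition valid :: "(nat \<Rightarrow> nat) pmf \<Rightarrow> cmi \<Rightarrow> bool" where
  "valid p K \<longleftrightarrow>
     (\<Sum>Q\<in>#snd K. condH p Q (fst K)) - condH p (\<Union>(set_mset (snd K))) (fst K) = 0"

definition degenerate :: "nat \<Rightarrow> cmi \<Rightarrow> bool" where
  "degenerate n K \<longleftrightarrow> (\<forall>p. admissible n p \<longrightarrow> valid p K)"

definition implies :: "nat \<Rightarrow> cmi \<Rightarrow> cmi \<Rightarrow> bool" where
  "implies n K K' \<longleftrightarrow> (\<forall>p. admissible n p \<longrightarrow> valid p K \<longrightarrow> valid p K')"

definition pur :: "cmi \<Rightarrow> cmi" where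
  "pur K = (fst K, filter_mset (\<lambda>Q. Q \<noteq> {}) (image_mset (\<lambda>Q. Q - fst K) (snd K)))"

text \<open>Repeated-index set of a (pure) CMI; members counted with multiplicity.\<close>
definition rep_idx :: "cmi \<Rightarrow> nat set" where
  "rep_idx K = (if size (snd K) \<ge> 2
     then {x. size (filter_mset (\<lambda>Q. x \<in> Q) (snd K)) \<ge> 2} else {})"

definition IK :: "cmi \<Rightarrow> nat set" where
  "IK K = rep_idx (pur K)"

definition Pparts :: "cmi \<Rightarrow> nat set multiset" where
  "Pparts K = filter_mset (\<lambda>P. P \<noteq> {}) (image_mset (\<lambda>Q. Q - rep_idx K) (snd K))"

text \<open>Canonical form in general-form notation: None stands for the degenerate symbol
  (\<cdot>,< >); Some (C, I, Ps) stands for (C, <I, I, Ps>), where the copies of I are omitted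
  when I is empty, and Ps is empty in the case (C,<I,I>).\<close>
definition canGF :: "cmi \<Rightarrow> (nat set \<times> nat set \<times> nat set multiset) option" where
  "canGF K = (let k = size (snd K); I = rep_idx K; Ps = Pparts K; t = size Ps in
     if k \<le> 1 then None
     else if I \<noteq> {} \<and> t \<le> 1 then Some (fst K, I, {#})
     else Some (fst K, I, Ps))"

definition can :: "cmi \<Rightarrow> cmi option" where
  "can K = map_option (\<lambda>(C, I, Ps). (C, (if I = {} then {#} else {#I, I#}) + Ps)) (canGF K)"

text \<open>R_K^{K'}; None stands for the degenerate symbol (\<cdot>,< >).\<close>
definition RKK :: "cmi \<Rightarrow> cmi \<Rightarrow> cmi option" where
  "RKK K K' = (case canGF (pur K') of
      None \<Rightarrow> None
    | Some (C', I', Ps') \<Rightarrow>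
        (let D = I' - IK K;
             Ts = filter_mset (\<lambda>T. T \<noteq> {}) (image_mset (\<lambda>P. P - IK K) Ps');
             u = size Ts in
         if D = {} \<and> u \<le> 1 then None
         else if D = {} then Some (C' - IK K, Ts)
         else if u \<le> 1 then Some (C' - IK K, {#D, D#})
         else Some (C' - IK K, {#D, D#} + Ts)))"

end

theory Submission
  imports Defs
begin

lemma entr_terms_out: "x \<notin> set_pmf q \<Longrightarrow> entr_terms q x = 0"
  by (simp add: entr_terms_def set_pmf_iff)

lemma ent_fin: "finite (set_pmf q) \<Longrightarrow> infsum (entr_terms q) UNIV = (\<Sum>x\<in>set_pmf q. entr_terms q x)"
proof -
  assume f: "finite (set_pmf q)"
  have "infsum (entr_terms q) UNIV = infsum (entr_terms q) (set_pmf q)"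
    by (rule infsum_cong_neutral) (auto simp: entr_terms_out)
  then show ?thesis using f by simp
qed

lemma summ_fin: "finite (set_pmf q) \<Longrightarrow> entr_terms q summable_on UNIV"
proof -
  assume f: "finite (set_pmf q)"
  have "entr_terms q summable_on set_pmf q" using f by simp
  then show ?thesis
    by (rule summable_on_cong_neutral[THEN iffD1, rotated -1]) (auto simp: entr_terms_out)
qed

lemma ent_unif: "finite S \<Longrightarrow> S \<noteq> {} \<Longrightarrow> infsum (entr_terms (pmf_of_set S)) UNIV = log 2 (card S)"
proof -
  assume f: "finite S" and ne: "S \<noteq> {}"
  have c: "card S > 0" using f ne by (simp add: card_gt_0_iff)
  have "infsum (entr_terms (pmf_of_set S)) UNIV = (\<Sum>x\<in>S. - (1/card S) * log 2 (1/card S))"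
    using f ne by (simp add: ent_fin entr_terms_def)
  also have "\<dots> = - log 2 (1/card S)" using c by simp
  also have "\<dots> = log 2 (card S)" using c by (simp add: log_divide)
  finally show ?thesis .
qed

lemma ent_map_inj: "inj_on g (set_pmf q) \<Longrightarrow> finite (set_pmf q) \<Longrightarrow>
   infsum (entr_terms (map_pmf g q)) UNIV = infsum (entr_terms q) UNIV"
proof -
  assume i: "inj_on g (set_pmf q)" and f: "finite (set_pmf q)"
  have "infsum (entr_terms (map_pmf g q)) UNIV = (\<Sum>x\<in>g ` set_pmf q. entr_terms (map_pmf g q) x)"
    using f by (simp add: ent_fin)
  also have "\<dots> = (\<Sum>x\<in>set_pmf q. entr_terms (map_pmf g q) (g x))"
    using i by (simp add: sum.reindex)
  also have "\<dots> = (\<Sum>x\<in>set_pmf q. entr_terms q x)"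
    using i by (intro sum.cong) (auto simp: entr_terms_def pmf_map_inj)
  finally show ?thesis using f by (simp add: ent_fin)
qed

lemma ent_const: "infsum (entr_terms (map_pmf (\<lambda>_. c) q)) UNIV = 0"
  using ent_unif[of "{c}"] by (simp add: map_pmf_const pmf_of_set_singleton)

lemma marg_map: "marg (map_pmf F U) \<alpha> = map_pmf (\<lambda>\<omega> i. if i \<in> \<alpha> then F \<omega> i else 0) U"
  by (simp add: marg_def map_pmf_comp)


lemma fiber_unif:
  fixes L :: "bool \<times> bool \<Rightarrow> bool"
  assumes "\<And>v. card {\<omega>. L \<omega> = v} = 2"
  shows "map_pmf L (pmf_of_set UNIV) = pmf_of_set UNIV"
proof (rule pmf_eqI)
  fix v
  have "pmf (map_pmf L (pmf_of_set UNIV)) v = measure (pmf_of_set UNIV) (L -` {v})"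
    by (simp add: pmf_map)
  also have "\<dots> = card {\<omega>. L \<omega> = v} / 4"
    by (subst measure_pmf_of_set) (auto simp: vimage_def)
  also have "\<dots> = pmf (pmf_of_set UNIV) v" using assms by simp
  finally show "pmf (map_pmf L (pmf_of_set UNIV)) v = pmf (pmf_of_set UNIV) v" .
qed

lemma fib_fst: "card {\<omega>::bool\<times>bool. fst \<omega> = v} = 2"
proof -
  have "{\<omega>::bool\<times>bool. fst \<omega> = v} = {(v,True),(v,False)}" by auto
  then show ?thesis by simp
qed
lemma fib_snd: "card {\<omega>::bool\<times>bool. snd \<omega> = v} = 2"
proof -
  have "{\<omega>::bool\<times>bool. snd \<omega> = v} = {(True,v),(False,v)}" by auto
  then show ?thesis by simp
qed
lemma fib_xor: "card {\<omega>::bool\<times>bool. (fst \<omega> = (\<not> snd \<omega>)) = v} = 2"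
proof -
  have "{\<omega>::bool\<times>bool. (fst \<omega> = (\<not> snd \<omega>)) = v} = {(True,\<not>v),(False,v)}" by auto
  then show ?thesis by simp
qed

definition p1 :: "nat set \<Rightarrow> (nat \<Rightarrow> nat) pmf" where
  "p1 A = map_pmf (\<lambda>b i. if i \<in> A then of_bool b else 0) (pmf_of_set (UNIV::bool set))"

lemma H_p1: "H (p1 A) \<alpha> = (if \<alpha> \<inter> A = {} then 0 else 1)"
proof (cases "\<alpha> \<inter> A = {}")
  case True
  have "(\<lambda>\<omega> i. if i \<in> \<alpha> then (if i \<in> A then of_bool \<omega> else 0) else 0) = (\<lambda>_ _. 0::nat)"
    using True by (auto intro!: ext)
  then show ?thesis using True
    by (simp add: H_def p1_def marg_map ent_const del: map_pmf_const)
next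
  case False
  then obtain a where a: "a \<in> \<alpha>" "a \<in> A" by auto
  have inj: "inj_on (\<lambda>\<omega> i. if i \<in> \<alpha> then (if i \<in> A then of_bool \<omega> else 0) else (0::nat)) (set_pmf (pmf_of_set UNIV))"
  proof (rule inj_onI)
    fix u v :: bool
    assume "(\<lambda>i. if i \<in> \<alpha> then (if i \<in> A then of_bool u else 0) else (0::nat)) =
            (\<lambda>i. if i \<in> \<alpha> then (if i \<in> A then of_bool v else 0) else 0)"
    from fun_cong[OF this, of a] a show "u = v" by (cases u; cases v) simp_all
  qed
  have "H (p1 A) \<alpha> = infsum (entr_terms (pmf_of_set (UNIV::bool set))) UNIV"
    unfolding H_def p1_def marg_map by (rule ent_map_inj[OF inj]) simp
  also have "\<dots> = 1" by (subst ent_unif) auto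
  finally show ?thesis using False by simp
qed

lemma adm_fin: "(\<And>\<alpha>. finite (set_pmf (marg p \<alpha>))) \<Longrightarrow> admissible n p"
  by (simp add: admissible_def finite_entropy_def summ_fin)

lemma adm_p1: "admissible n (p1 A)"
  by (rule adm_fin) (simp add: p1_def marg_map)

definition G2 :: "nat \<Rightarrow> nat \<Rightarrow> nat \<Rightarrow> bool \<times> bool \<Rightarrow> nat \<Rightarrow> bool" where
  "G2 x y1 y2 \<omega> i = (if i = y1 then fst \<omega> else if i = y2 then snd \<omega> else if i = x then fst \<omega> \<noteq> snd \<omega> else False)"

definition p2 :: "nat \<Rightarrow> nat \<Rightarrow> nat \<Rightarrow> (nat \<Rightarrow> nat) pmf" where
  "p2 x y1 y2 = map_pmf (\<lambda>\<omega> i. of_bool (G2 x y1 y2 \<omega> i)) (pmf_of_set (UNIV::(bool\<times>bool) set))"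

lemma adm_p2: "admissible n (p2 x y1 y2)"
  by (rule adm_fin) (simp add: p2_def marg_map)

lemma G2_single:
  assumes "distinct [x,y1,y2]" "r \<in> {x,y1,y2}"
  shows "map_pmf (\<lambda>\<omega>. G2 x y1 y2 \<omega> r) (pmf_of_set UNIV) = pmf_of_set UNIV"
proof -
  consider "r = y1" | "r = y2" | "r = x" using assms by auto
  then show ?thesis
  proof cases
    case 1 then show ?thesis using assms by (intro fiber_unif) (simp add: G2_def fib_fst)
  next
    case 2 then show ?thesis using assms by (intro fiber_unif) (simp add: G2_def fib_snd)
  next
    case 3 then show ?thesis using assms by (intro fiber_unif) (simp add: G2_def fib_xor)
  qed
qed

lemma G2_pair:
  assumes "distinct [x,y1,y2]" "r1 \<in> {x,y1,y2}" "r2 \<in> {x,y1,y2}" "r1 \<noteq> r2"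
    "G2 x y1 y2 u r1 = G2 x y1 y2 v r1" "G2 x y1 y2 u r2 = G2 x y1 y2 v r2"
  shows "u = v"
  using assms unfolding G2_def by (cases u; cases v) auto

lemma H_p2:
  assumes d: "distinct [x,y1,y2]"
  shows "H (p2 x y1 y2) \<alpha> = min 2 (card (\<alpha> \<inter> {x,y1,y2}))"
proof -
  let ?R = "{x,y1,y2}"
  let ?g = "\<lambda>\<omega> i. if i \<in> \<alpha> then of_bool (G2 x y1 y2 \<omega> i) else (0::nat)"
  have Hg: "H (p2 x y1 y2) \<alpha> = infsum (entr_terms (map_pmf ?g (pmf_of_set UNIV))) UNIV"
    by (simp add: H_def p2_def marg_map)
  have out: "i \<notin> ?R \<Longrightarrow> G2 x y1 y2 \<omega> i = False" for i \<omega> by (auto simp: G2_def)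
  have fin: "finite (\<alpha> \<inter> ?R)" by simp
  consider "\<alpha> \<inter> ?R = {}" | r where "\<alpha> \<inter> ?R = {r}" | r1 r2 where "r1 \<in> \<alpha> \<inter> ?R" "r2 \<in> \<alpha> \<inter> ?R" "r1 \<noteq> r2"
    by blast
  then show ?thesis
  proof cases
    case 1
    have "?g = (\<lambda>_ _. 0)" using 1 by (auto intro!: ext simp: G2_def)
    then show ?thesis using 1 Hg by (simp add: ent_const del: map_pmf_const)
  next
    case 2
    have rR: "r \<in> ?R" using 2 by blast
    have "?g = (\<lambda>v i. if i = r then of_bool v else 0) \<circ> (\<lambda>\<omega>. G2 x y1 y2 \<omega> r)"
    proof (intro ext)
      fix \<omega> i
      show "?g \<omega> i = ((\<lambda>v i. if i = r then of_bool v else 0) \<circ> (\<lambda>\<omega>. G2 x y1 y2 \<omega> r)) \<omega> i"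
        using 2 out[of i \<omega>] by auto
    qed
    then have "map_pmf ?g (pmf_of_set UNIV) = map_pmf (\<lambda>v i. if i = r then of_bool v else 0)
        (map_pmf (\<lambda>\<omega>. G2 x y1 y2 \<omega> r) (pmf_of_set UNIV))"
      by (simp add: map_pmf_comp o_def)
    also have "\<dots> = map_pmf (\<lambda>v i. if i = r then of_bool v else (0::nat)) (pmf_of_set UNIV)"
      using G2_single[OF d rR] by simp
    finally have e: "map_pmf ?g (pmf_of_set UNIV) = \<dots>" .
    have inj: "inj_on (\<lambda>v i. if i = r then of_bool v else (0::nat)) (set_pmf (pmf_of_set (UNIV::bool set)))"
    proof (rule inj_onI)
      fix u v :: bool
      assume "(\<lambda>i. if i = r then of_bool u else (0::nat)) = (\<lambda>i. if i = r then of_bool v else 0)"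
      from fun_cong[OF this, of r] show "u = v" by (cases u; cases v) simp_all
    qed
    have "H (p2 x y1 y2) \<alpha> = infsum (entr_terms (pmf_of_set (UNIV::bool set))) UNIV"
      unfolding Hg e by (rule ent_map_inj[OF inj]) simp
    also have "\<dots> = 1" by (subst ent_unif) auto
    finally show ?thesis using 2 by simp
  next
    case 3
    have inj: "inj_on ?g (set_pmf (pmf_of_set (UNIV::(bool\<times>bool) set)))"
    proof (rule inj_onI)
      fix u v
      assume e: "?g u = ?g v"
      have ob: "(of_bool a = (of_bool b :: nat)) = (a = b)" for a b by (cases a; cases b) simp_all
      have e1: "G2 x y1 y2 u r1 = G2 x y1 y2 v r1" using fun_cong[OF e, of r1] 3 ob by simp
      have e2: "G2 x y1 y2 u r2 = G2 x y1 y2 v r2" using fun_cong[OF e, of r2] 3 ob by simp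
      show "u = v" by (rule G2_pair[OF d _ _ _ e1 e2]) (use 3 in auto)
    qed
    have "H (p2 x y1 y2) \<alpha> = infsum (entr_terms (pmf_of_set (UNIV::(bool\<times>bool) set))) UNIV"
      unfolding Hg by (rule ent_map_inj[OF inj]) simp
    also have "\<dots> = 2"
    proof -
      have "log 2 (4::real) = log 2 (2 powr 2)" by simp
      also have "\<dots> = 2" by (subst log_powr_cancel) auto
      finally show ?thesis by (subst ent_unif) auto
    qed
    finally have h2: "H (p2 x y1 y2) \<alpha> = 2" .
    have "card {r1, r2} \<le> card (\<alpha> \<inter> ?R)" using 3 by (intro card_mono fin) auto
    then have "2 \<le> card (\<alpha> \<inter> ?R)" using 3 by simp
    then show ?thesis using h2 by simp
  qed
qed

lemma sum_of_bool: "(\<Sum>Q\<in>#M. (of_bool (P Q) :: real)) = real (size (filter_mset P M))"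
  by (induction M) auto

lemma two_elems: "2 \<le> size M \<Longrightarrow> \<exists>a b. {#a, b#} \<subseteq># M"
proof -
  assume s: "2 \<le> size M"
  then obtain a M1 where M1: "M = add_mset a M1" by (metis multiset_cases not_numeral_le_zero size_empty)
  then have "1 \<le> size M1" using s by simp
  then obtain b M2 where "M1 = add_mset b M2" by (metis multiset_cases not_one_le_zero size_empty)
  then have "{#a, b#} \<subseteq># M" using M1 by simp
  then show ?thesis by blast
qed

lemma filt_img: "filter_mset (\<lambda>P. P \<noteq> {}) (image_mset f M) = image_mset f (filter_mset (\<lambda>Q. f Q \<noteq> {}) M)"
  by (induction M) auto

lemma size_pur: "size (snd (pur K)) = size (filter_mset (\<lambda>Q. Q - fst K \<noteq> {}) (snd K))"
  by (simp add: pur_def filt_img)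

lemma count_gen: "y \<notin> C \<Longrightarrow> filter_mset (\<lambda>Q. y \<in> Q) (filter_mset (\<lambda>P. P \<noteq> {}) (image_mset (\<lambda>Q. Q - C) M))
   = image_mset (\<lambda>Q. Q - C) (filter_mset (\<lambda>Q. y \<in> Q) M)"
  by (induction M) auto

lemma count_pur: "y \<notin> fst K \<Longrightarrow>
  size (filter_mset (\<lambda>Q. y \<in> Q) (snd (pur K))) = size (filter_mset (\<lambda>Q. y \<in> Q) (snd K))"
proof -
  assume y: "y \<notin> fst K"
  have "filter_mset (\<lambda>Q. y \<in> Q) (snd (pur K)) = image_mset (\<lambda>Q. Q - fst K) (filter_mset (\<lambda>Q. y \<in> Q) (snd K))"
    using y unfolding pur_def snd_conv by (rule count_gen)
  then show ?thesis by simp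
qed

lemma count_pur0: "y \<in> fst K \<Longrightarrow> size (filter_mset (\<lambda>Q. y \<in> Q) (snd (pur K))) = 0"
  by (auto simp: pur_def filter_mset_eq_conv)

lemma rep_pur: "2 \<le> size (snd (pur K)) \<Longrightarrow> y \<notin> fst K \<Longrightarrow>
   (y \<in> rep_idx (pur K)) = (2 \<le> size (filter_mset (\<lambda>Q. y \<in> Q) (snd K)))"
  by (simp add: rep_idx_def count_pur)

lemma rep_notC: "y \<in> rep_idx (pur K) \<Longrightarrow> y \<notin> fst K"
  by (auto simp: rep_idx_def count_pur0 split: if_splits)

lemma canGF_facts: "canGF K = Some (C, I, Ps) \<Longrightarrow> C = fst K \<and> I = rep_idx K \<and> 2 \<le> size (snd K) \<and>
   (Ps = Pparts K \<or> (Ps = {#} \<and> I \<noteq> {} \<and> size (Pparts K) \<le> 1))"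
  by (auto simp: canGF_def Let_def split: if_splits)

lemma Pparts_pur: "Pparts (pur K) = image_mset (\<lambda>Q. (Q - fst K) - rep_idx (pur K))
     (filter_mset (\<lambda>Q. (Q - fst K) - rep_idx (pur K) \<noteq> {}) (snd K))"
proof -
  have "Pparts (pur K) = filter_mset (\<lambda>P. P \<noteq> {}) (image_mset (\<lambda>Q. Q - rep_idx (pur K))
      (image_mset (\<lambda>Q. Q - fst K) (filter_mset (\<lambda>Q. Q - fst K \<noteq> {}) (snd K))))"
    by (simp add: Pparts_def pur_def filt_img)
  also have "\<dots> = image_mset (\<lambda>Q. (Q - fst K) - rep_idx (pur K))
     (filter_mset (\<lambda>Q. (Q - fst K) - rep_idx (pur K) \<noteq> {}) (filter_mset (\<lambda>Q. Q - fst K \<noteq> {}) (snd K)))"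
    by (simp add: filt_img image_mset.compositionality o_def)
  also have "filter_mset (\<lambda>Q. (Q - fst K) - rep_idx (pur K) \<noteq> {}) (filter_mset (\<lambda>Q. Q - fst K \<noteq> {}) (snd K))
     = filter_mset (\<lambda>Q. (Q - fst K) - rep_idx (pur K) \<noteq> {}) (snd K)"
    by (auto simp: filter_filter_mset intro!: filter_mset_cong)
  finally show ?thesis .
qed

lemma two_filter: "{#a, b#} \<subseteq># M \<Longrightarrow> P a \<Longrightarrow> P b \<Longrightarrow> 2 \<le> size (filter_mset P M)"
proof -
  assume s: "{#a, b#} \<subseteq># M" and "P a" "P b"
  then have "filter_mset P {#a, b#} = {#a, b#}" by simp
  then have "{#a, b#} \<subseteq># filter_mset P M" using multiset_filter_mono[OF s, of P] by simp
  from size_mset_mono[OF this] show ?thesis by simp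
qed

lemma two_pick: "2 \<le> size (filter_mset P M) \<Longrightarrow> \<exists>a b. {#a, b#} \<subseteq># M \<and> P a \<and> P b"
proof -
  assume "2 \<le> size (filter_mset P M)"
  from two_elems[OF this] obtain a b where ab: "{#a, b#} \<subseteq># filter_mset P M" by blast
  have "a \<in># filter_mset P M" "b \<in># filter_mset P M" using mset_subset_eqD[OF ab] by auto
  moreover have "{#a, b#} \<subseteq># M" using ab multiset_filter_subset subset_mset.order_trans by blast
  ultimately show ?thesis by auto
qed

lemma pur_fst[simp]: "fst (pur K) = fst K" by (simp add: pur_def)

lemma claim1:
  assumes g1: "canGF (pur K') = Some (C1, I1, Ps1)" and imp: "implies n K K'"
  shows "fst K \<subseteq> fst K'"
proof (rule ccontr)
  assume "\<not> ?thesis"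
  then obtain c where c: "c \<in> fst K" "c \<notin> fst K'" by blast
  from canGF_facts[OF g1] have "2 \<le> size (snd (pur K'))" by simp
  then have "2 \<le> size (filter_mset (\<lambda>Q. Q - fst K' \<noteq> {}) (snd K'))" by (simp add: size_pur)
  from two_pick[OF this] obtain Q1 Q2 where q: "{#Q1, Q2#} \<subseteq># snd K'"
    "Q1 - fst K' \<noteq> {}" "Q2 - fst K' \<noteq> {}" by blast
  then obtain x1 x2 where x: "x1 \<in> Q1" "x1 \<notin> fst K'" "x2 \<in> Q2" "x2 \<notin> fst K'" by blast
  define A where "A = {c, x1, x2}"
  let ?p = "p1 A"
  have vK: "valid ?p K"
  proof -
    have "\<And>Q. (Q \<union> fst K) \<inter> A \<noteq> {}" "fst K \<inter> A \<noteq> {}" using c by (auto simp: A_def)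
    then show ?thesis by (simp add: valid_def condH_def H_p1)
  qed
  have nv: "\<not> valid ?p K'"
  proof -
    have dA: "fst K' \<inter> A = {}" using c x by (auto simp: A_def)
    have e: "condH ?p Q (fst K') = of_bool (Q \<inter> A \<noteq> {})" for Q
      using dA by (auto simp: condH_def H_p1 Int_Un_distrib2)
    have "2 \<le> size (filter_mset (\<lambda>Q. Q \<inter> A \<noteq> {}) (snd K'))"
      by (rule two_filter[OF q(1)]) (use x in \<open>auto simp: A_def\<close>)
    then have s2: "2 \<le> (\<Sum>Q\<in>#snd K'. condH ?p Q (fst K'))" by (simp add: e sum_of_bool)
    have "condH ?p (\<Union>(set_mset (snd K'))) (fst K') \<le> 1" by (simp add: e)
    then show ?thesis using s2 by (simp add: valid_def)
  qed
  show False using imp vK nv adm_p1 by (auto simp: implies_def)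
qed

lemma size_le1: "\<not> 2 \<le> size (filter_mset P M) \<Longrightarrow> size (filter_mset P M) = (if \<exists>Q\<in>#M. P Q then 1 else 0)"
proof -
  assume a: "\<not> 2 \<le> size (filter_mset P M)"
  show ?thesis
  proof (cases "\<exists>Q\<in>#M. P Q")
    case True
    then have "filter_mset P M \<noteq> {#}" by (auto simp: filter_mset_eq_conv)
    then have "size (filter_mset P M) \<noteq> 0" by simp
    then have "size (filter_mset P M) = 1" using a by linarith
    then show ?thesis using True by simp
  next
    case False
    then have "filter_mset P M = {#}" by (auto simp: filter_mset_eq_conv)
    then show ?thesis using False by simp
  qed
qed

lemma claim2:
  assumes g: "canGF (pur K) = Some (C, I, Ps)" and g1: "canGF (pur K') = Some (C1, I1, Ps1)"
    and imp: "implies n K K'"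
  shows "rep_idx (pur K') \<subseteq> rep_idx (pur K)"
proof (rule subsetI, rule ccontr)
  fix d assume d: "d \<in> rep_idx (pur K')" "d \<notin> rep_idx (pur K)"
  have dC': "d \<notin> fst K'" using rep_notC[OF d(1)] by simp
  have dC: "d \<notin> fst K" using dC' claim1[OF g1 imp] by blast
  have s: "2 \<le> size (snd (pur K))" using canGF_facts[OF g] by simp
  have s1: "2 \<le> size (snd (pur K'))" using canGF_facts[OF g1] by simp
  have c1: "2 \<le> size (filter_mset (\<lambda>Q. d \<in> Q) (snd K'))" using rep_pur[OF s1] dC' d by simp
  have c0: "\<not> 2 \<le> size (filter_mset (\<lambda>Q. d \<in> Q) (snd K))" using rep_pur[OF s] dC d by simp
  let ?p = "p1 {d}"
  have e: "condH ?p Q C = of_bool (d \<in> Q)" if "d \<notin> C" for Q C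
    using that by (auto simp: condH_def H_p1)
  have vK: "valid ?p K"
    using size_le1[OF c0] dC by (simp add: valid_def e sum_of_bool)
  have nv: "\<not> valid ?p K'"
  proof -
    have u: "condH ?p (\<Union>(set_mset (snd K'))) (fst K') \<le> 1" using dC' by (simp add: e)
    have sm: "(\<Sum>Q\<in>#snd K'. condH ?p Q (fst K')) = real (size (filter_mset (\<lambda>Q. d \<in> Q) (snd K')))"
      using dC' by (simp add: e sum_of_bool)
    have "2 \<le> real (size (filter_mset (\<lambda>Q. d \<in> Q) (snd K')))" using c1 by simp
    then show ?thesis unfolding valid_def using sm u by linarith
  qed
  show False using imp vK nv adm_p1 by (auto simp: implies_def)
qed

lemma size_filter_imp: "(\<And>Q. P Q \<Longrightarrow> P' Q) \<Longrightarrow> size (filter_mset P M) \<le> size (filter_mset P' M)"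
  by (induction M) auto

lemma card2: "finite B \<Longrightarrow> {a, b} \<subseteq> B \<Longrightarrow> a \<noteq> b \<Longrightarrow> 2 \<le> card B"
  using card_mono[of B "{a,b}"] by simp

lemma card1: "finite B \<Longrightarrow> a \<in> B \<Longrightarrow> 1 \<le> card B"
  using card_mono[of B "{a}"] by simp

lemma card_y: "x \<notin> Q \<Longrightarrow> y1 \<noteq> y2 \<Longrightarrow>
  card (Q \<inter> {x, y1, y2}) = of_bool (y1 \<in> Q) + of_bool (y2 \<in> Q)"
  by (cases "y1 \<in> Q"; cases "y2 \<in> Q") (auto simp: Int_insert_right)

lemma claim3:
  assumes g: "canGF (pur K) = Some (C, I, Ps)" and g1: "canGF (pur K') = Some (C1, I1, Ps1)"
    and imp: "implies n K K'"
    and q: "{#Q1, Q2#} \<subseteq># snd K'"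
    and y1: "y1 \<in> Q1" "y1 \<notin> fst K'" "y1 \<notin> rep_idx (pur K')" "y1 \<notin> rep_idx (pur K)"
    and y2: "y2 \<in> Q2" "y2 \<notin> fst K'" "y2 \<notin> rep_idx (pur K')" "y2 \<notin> rep_idx (pur K)"
    and x: "x \<in> fst K'" "x \<notin> rep_idx (pur K)" "x \<notin> fst K" "x \<notin> \<Union>(set_mset Ps)"
  shows False
proof -
  have s: "2 \<le> size (snd (pur K))" using canGF_facts[OF g] by simp
  have s1: "2 \<le> size (snd (pur K'))" using canGF_facts[OF g1] by simp
  have yy: "y1 \<noteq> y2"
  proof
    assume "y1 = y2"
    then have "2 \<le> size (filter_mset (\<lambda>Q. y1 \<in> Q) (snd K'))"
      using y1 y2 by (intro two_filter[OF q]) auto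
    then show False using rep_pur[OF s1 y1(2)] y1(3) by simp
  qed
  have d: "distinct [x, y1, y2]" using x y1 y2 yy by auto
  have CC: "fst K \<subseteq> fst K'" by (rule claim1[OF g1 imp])
  define R where "R = {x, y1, y2}"
  let ?p = "p2 x y1 y2"
  have hH: "H ?p \<alpha> = min 2 (card (\<alpha> \<inter> R))" for \<alpha> unfolding R_def by (rule H_p2[OF d])
  have finR: "finite (B \<inter> R)" for B by (simp add: R_def)
  have nv: "\<not> valid ?p K'"
  proof -
    have C'R: "fst K' \<inter> R = {x}" using x y1 y2 by (auto simp: R_def)
    have HC': "H ?p (fst K') = 1" by (simp add: hH C'R)
    have ge: "of_bool (Q \<inter> {y1, y2} \<noteq> {}) \<le> condH ?p Q (fst K')" for Q
    proof (cases "Q \<inter> {y1, y2} = {}")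
      case True
      have "1 \<le> card ((Q \<union> fst K') \<inter> R)" by (rule card1[OF finR, where a=x]) (use x in \<open>auto simp: R_def\<close>)
      then show ?thesis using True by (simp add: condH_def HC' hH C'R)
    next
      case False
      then obtain y where y: "y \<in> Q" "y \<in> {y1, y2}" by blast
      have "2 \<le> card ((Q \<union> fst K') \<inter> R)"
        by (rule card2[OF finR, where a=x and b=y]) (use x y d in \<open>auto simp: R_def\<close>)
      then show ?thesis using False by (simp add: condH_def HC' hH C'R)
    qed
    have "2 \<le> size (filter_mset (\<lambda>Q. Q \<inter> {y1, y2} \<noteq> {}) (snd K'))"
      by (rule two_filter[OF q]) (use y1 y2 in auto)
    then have "2 \<le> (\<Sum>Q\<in>#snd K'. (of_bool (Q \<inter> {y1, y2} \<noteq> {}) :: real))"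
      by (simp only: sum_of_bool)
    also have "\<dots> \<le> (\<Sum>Q\<in>#snd K'. condH ?p Q (fst K'))" by (rule sum_mset_mono) (rule ge)
    finally have s2: "2 \<le> (\<Sum>Q\<in>#snd K'. condH ?p Q (fst K'))" .
    have "condH ?p (\<Union>(set_mset (snd K'))) (fst K') \<le> 1" by (simp add: condH_def HC' hH C'R)
    then show ?thesis using s2 unfolding valid_def by linarith
  qed
  have y1C: "y1 \<notin> fst K" and y2C: "y2 \<notin> fst K" using CC y1 y2 by auto
  have CR: "fst K \<inter> R = {}" using x y1C y2C by (auto simp: R_def)
  have eK: "condH ?p Q (fst K) = min 2 (card (Q \<inter> R))" for Q
  proof -
    have "(Q \<union> fst K) \<inter> R = Q \<inter> R" using CR by blast
    then show ?thesis by (simp add: condH_def hH CR)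
  qed
  have vK: "valid ?p K"
  proof -
    consider "Ps = Pparts (pur K)" | "size (Pparts (pur K)) \<le> 1"
      using canGF_facts[OF g] by auto
    then show ?thesis
    proof cases
      case 1
      have xQ: "x \<notin> Q" if "Q \<in># snd K" for Q
      proof
        assume xq: "x \<in> Q"
        let ?P = "(Q - fst K) - rep_idx (pur K)"
        have "x \<in> ?P" using xq x by auto
        moreover have "?P \<in># Pparts (pur K)" unfolding Pparts_pur using that xq x
          by (auto intro!: imageI)
        ultimately show False using x(4) 1 by auto
      qed
      have c1: "\<not> 2 \<le> size (filter_mset (\<lambda>Q. y1 \<in> Q) (snd K))" using rep_pur[OF s y1C] y1 by simp
      have c2: "\<not> 2 \<le> size (filter_mset (\<lambda>Q. y2 \<in> Q) (snd K))" using rep_pur[OF s y2C] y2 by simp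
      have fQ: "(min 2 (card (Q \<inter> R)) :: real) = of_bool (y1 \<in> Q) + of_bool (y2 \<in> Q)" if "x \<notin> Q" for Q
        using card_y[OF that yy] unfolding R_def by auto
      have "(\<Sum>Q\<in>#snd K. condH ?p Q (fst K)) = (\<Sum>Q\<in>#snd K. (of_bool (y1 \<in> Q) + of_bool (y2 \<in> Q) :: real))"
        by (rule arg_cong[where f = sum_mset], rule image_mset_cong) (simp add: eK fQ xQ)
      also have "\<dots> = real (size (filter_mset (\<lambda>Q. y1 \<in> Q) (snd K))) + real (size (filter_mset (\<lambda>Q. y2 \<in> Q) (snd K)))"
        by (simp add: sum_mset.distrib sum_of_bool)
      also have "\<dots> = of_bool (y1 \<in> \<Union>(set_mset (snd K))) + of_bool (y2 \<in> \<Union>(set_mset (snd K)))"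
        using size_le1[OF c1] size_le1[OF c2] by auto
      also have "\<dots> = condH ?p (\<Union>(set_mset (snd K))) (fst K)"
        using xQ by (simp add: eK fQ)
      finally show ?thesis by (simp add: valid_def)
    next
      case 2
      let ?N = "filter_mset (\<lambda>Q. Q \<inter> R \<noteq> {}) (snd K)"
      have "size ?N \<le> size (filter_mset (\<lambda>Q. (Q - fst K) - rep_idx (pur K) \<noteq> {}) (snd K))"
        by (rule size_filter_imp) (use x y1 y2 y1C y2C in \<open>auto simp: R_def\<close>)
      also have "\<dots> = size (Pparts (pur K))" by (simp add: Pparts_pur)
      finally have sN: "size ?N \<le> 1" using 2 by simp
      have split: "(\<Sum>Q\<in>#snd K. condH ?p Q (fst K)) = (\<Sum>Q\<in>#?N. condH ?p Q (fst K))"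
      proof -
        have "(\<Sum>Q\<in>#snd K. condH ?p Q (fst K)) = (\<Sum>Q\<in>#?N. condH ?p Q (fst K)) +
              (\<Sum>Q\<in>#filter_mset (\<lambda>Q. \<not> Q \<inter> R \<noteq> {}) (snd K). condH ?p Q (fst K))"
          using arg_cong[OF multiset_partition[of "snd K" "\<lambda>Q. Q \<inter> R \<noteq> {}"],
              of "\<lambda>M. \<Sum>Q\<in>#M. condH ?p Q (fst K)"]
          by (simp only: image_mset_union sum_mset.union)
        also have "(\<Sum>Q\<in>#filter_mset (\<lambda>Q. \<not> Q \<inter> R \<noteq> {}) (snd K). condH ?p Q (fst K)) = 0"
          by (rule sum_mset.neutral) (auto simp: eK)
        finally show ?thesis by simp
      qed
      consider "?N = {#}" | Q0 where "?N = {#Q0#}"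
      proof (cases "size ?N = 0")
        case True then show ?thesis using that(1) by simp
      next
        case False then have "size ?N = 1" using sN by linarith
        then show ?thesis using that(2) size_1_singleton_mset by blast
      qed
      then show ?thesis
      proof cases
        case 1
        have "\<Union>(set_mset (snd K)) \<inter> R = {}"
        proof -
          have "\<forall>Q\<in>#snd K. Q \<inter> R = {}" using 1 by (auto simp: filter_mset_eq_conv)
          then show ?thesis by blast
        qed
        then show ?thesis using split 1 by (simp add: valid_def eK)
      next
        case 2
        have Q0: "Q0 \<in># snd K" using 2 by (metis multiset_filter_subset mset_subset_eqD union_single_eq_member)
        have "\<Union>(set_mset (snd K)) \<inter> R = Q0 \<inter> R"
        proof
          show "\<Union>(set_mset (snd K)) \<inter> R \<subseteq> Q0 \<inter> R"
          proof
            fix r assume "r \<in> \<Union>(set_mset (snd K)) \<inter> R"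
            then obtain Q where Q: "Q \<in># snd K" "r \<in> Q" "r \<in> R" by blast
            then have "Q \<in># ?N" by auto
            then have "Q = Q0" using 2 by simp
            then show "r \<in> Q0 \<inter> R" using Q by simp
          qed
        qed (use Q0 in blast)
        then show ?thesis using split 2 by (simp add: valid_def eK)
      qed
    qed
  qed
  show False using imp vK nv adm_p2 by (auto simp: implies_def)
qed

theorem mainTheorem9:
  fixes n :: nat and K K' K'' :: cmi
    and C I C'' I'' :: "nat set" and Ps Ps'' :: "nat set multiset"
  assumes "wf_cmi n K" and "wf_cmi n K'"
    and "\<not> degenerate n K" and "\<not> degenerate n K'"
    and "canGF (pur K) = Some (C, I, Ps)"
    and "implies n K K'"
    and "RKK K K' = Some K''"
    and "canGF (pur K'') = Some (C'', I'', Ps'')"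
  shows "C \<subseteq> C'' \<and> C'' \<subseteq> (C \<union> \<Union>(set_mset Ps)) - \<Union>(set_mset Ps'')"
proof -
  note g = assms(5) and imp = assms(6) and r = assms(7) and g2 = assms(8)
  have gf: "C = fst K" "I = rep_idx (pur K)" using canGF_facts[OF g] by auto
  obtain C1 I1 Ps1 where g1: "canGF (pur K') = Some (C1, I1, Ps1)"
    using r by (cases "canGF (pur K')") (auto simp: RKK_def)
  have gf1: "C1 = fst K'" "I1 = rep_idx (pur K')" "Ps1 = Pparts (pur K') \<or> Ps1 = {#}"
    using canGF_facts[OF g1] by auto
  have CC: "fst K \<subseteq> fst K'" by (rule claim1[OF g1 imp])
  have D: "I1 - IK K = {}" using claim2[OF g g1 imp] gf1 by (auto simp: IK_def)
  define Ts where "Ts = filter_mset (\<lambda>T. T \<noteq> {}) (image_mset (\<lambda>P. P - IK K) Ps1)"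
  have rr: "2 \<le> size Ts \<and> K'' = (fst K' - IK K, Ts)"
    using r D gf1(1) unfolding RKK_def g1 by (auto simp: Ts_def Let_def split: if_splits)
  have Ps1: "Ps1 = Pparts (pur K')"
  proof (rule ccontr)
    assume "Ps1 \<noteq> Pparts (pur K')"
    then have "Ps1 = {#}" using gf1 by auto
    then show False using rr by (simp add: Ts_def)
  qed
  let ?I' = "rep_idx (pur K')"
  let ?IK = "rep_idx (pur K)"
  have Ts_eq: "Ts = image_mset (\<lambda>Q. ((Q - fst K') - ?I') - ?IK)
     (filter_mset (\<lambda>Q. ((Q - fst K') - ?I') - ?IK \<noteq> {}) (filter_mset (\<lambda>Q. (Q - fst K') - ?I' \<noteq> {}) (snd K')))"
    unfolding Ts_def Ps1 Pparts_pur by (simp add: filt_img image_mset.compositionality o_def IK_def)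
  have "2 \<le> size (filter_mset (\<lambda>Q. ((Q - fst K') - ?I') - ?IK \<noteq> {}) (filter_mset (\<lambda>Q. (Q - fst K') - ?I' \<noteq> {}) (snd K')))"
    using rr Ts_eq by simp
  from two_pick[OF this] obtain Q1 Q2 where
    q0: "{#Q1, Q2#} \<subseteq># filter_mset (\<lambda>Q. (Q - fst K') - ?I' \<noteq> {}) (snd K')"
    and q1: "((Q1 - fst K') - ?I') - ?IK \<noteq> {}" and q2: "((Q2 - fst K') - ?I') - ?IK \<noteq> {}" by blast
  have q: "{#Q1, Q2#} \<subseteq># snd K'" using q0 multiset_filter_subset subset_mset.order_trans by blast
  obtain y1 where y1: "y1 \<in> Q1" "y1 \<notin> fst K'" "y1 \<notin> ?I'" "y1 \<notin> ?IK" using q1 by blast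
  obtain y2 where y2: "y2 \<in> Q2" "y2 \<notin> fst K'" "y2 \<notin> ?I'" "y2 \<notin> ?IK" using q2 by blast
  have g2f: "C'' = fst K''" "Ps'' = Pparts (pur K'') \<or> Ps'' = {#}" using canGF_facts[OF g2] by auto
  have C'': "C'' = fst K' - ?IK" using g2f rr by (simp add: IK_def)
  have a: "C \<subseteq> C''"
  proof
    fix c assume "c \<in> C"
    then have "c \<in> fst K" using gf by simp
    moreover have "c \<notin> ?IK" using rep_notC calculation by fastforce
    ultimately show "c \<in> C''" using CC C'' by auto
  qed
  have b: "C'' \<subseteq> C \<union> \<Union>(set_mset Ps)"
  proof
    fix x assume xC: "x \<in> C''"
    show "x \<in> C \<union> \<Union>(set_mset Ps)"
    proof (rule ccontr)
      assume nx: "x \<notin> C \<union> \<Union>(set_mset Ps)"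
      have "x \<in> fst K'" "x \<notin> ?IK" "x \<notin> fst K" "x \<notin> \<Union>(set_mset Ps)"
        using xC nx C'' gf by auto
      from claim3[OF g g1 imp q y1 y2 this] show False .
    qed
  qed
  have c: "C'' \<inter> \<Union>(set_mset Ps'') = {}"
    using g2f by (auto simp: Pparts_pur)
  show ?thesis using a b c by blast
qed

end
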